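(* Let $R$ be a Noetherian ring, let $P\in\operatorname{Spec}(R)$, and let $f:R\to R_P$ be the localization map. Let $\mathcal P(P)$ be the set of $P$-primary ideals of $R$, regarded as a subspace of $\mathcal I^\bullet(R)$ with the constructible topology, and let $\mathcal P(P)_\infty$ be the set of ideals of $R$ that are intersections of nonempty families of $P$-primary ideals. Then $$\mathcal P(P)_\infty=\mathrm{Cl}^\mathrm{cons}(\mathcal P(P))=f^\sharp(\mathcal I^\bullet(R_P)),$$ where $f^\sharp(J):=f^{-1}(J)$. In particular, if $R$ is local with maximal ideal $\mathfrak m$, then $\mathcal P(\mathfrak m)$ is dense in $\mathcal I^\bullet(R)$ with respect to the constructible topology.
   Context: For a ring $A$, $\mathcal I(A)$ is the set of ideals of $A$ and $\mathcal I^\bullet(A)$ the set of proper ideals. $\mathcal I(A)$ carries the Zariski topology with basis of open sets $\mathcal B(x_1,\ldots,x_n):=\{I\in\mathcal I(A)\mid x_1,\ldots,x_n\in I\}$; it is a spectral space. The constructible topology is the coarsest topology in which all open quasi-compact subsets of $\mathcal I(A)$ are clopen; $\mathrm{Cl}^\mathrm{cons}$ denotes closure in it, and $\mathcal I^\bullet(A)$ carries the subspace topology. *)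

theory Defs
  imports "HOL-Analysis.Analysis"
begin

definition ring_ideal :: "'a::comm_ring_1 set \<Rightarrow> bool" where
  "ring_ideal I \<longleftrightarrow> 0 \<in> I \<and> (\<forall>x\<in>I. \<forall>y\<in>I. x + y \<in> I) \<and> (\<forall>r. \<forall>x\<in>I. r * x \<in> I)"

definition ideals :: "'a::comm_ring_1 set set" where
  "ideals = {I. ring_ideal I}"

definition proper_ideals :: "'a::comm_ring_1 set set" where
  "proper_ideals = {I. ring_ideal I \<and> I \<noteq> UNIV}"

definition prime_ideal :: "'a::comm_ring_1 set \<Rightarrow> bool" where
  "prime_ideal P \<longleftrightarrow> ring_ideal P \<and> P \<noteq> UNIV \<and> (\<forall>a b. a * b \<in> P \<longrightarrow> a \<in> P \<or> b \<in> P)"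

definition maximal_ideal :: "'a::comm_ring_1 set \<Rightarrow> bool" where
  "maximal_ideal M \<longleftrightarrow> ring_ideal M \<and> M \<noteq> UNIV \<and>
     (\<forall>J. ring_ideal J \<and> M \<subseteq> J \<longrightarrow> J = M \<or> J = UNIV)"

definition ideal_radical :: "'a::comm_ring_1 set \<Rightarrow> 'a set" where
  "ideal_radical I = {x. \<exists>n. x ^ n \<in> I}"

definition primary_ideal :: "'a::comm_ring_1 set \<Rightarrow> bool" where
  "primary_ideal Q \<longleftrightarrow> ring_ideal Q \<and> Q \<noteq> UNIV \<and>
     (\<forall>x y. x * y \<in> Q \<longrightarrow> x \<in> Q \<or> (\<exists>n. y ^ n \<in> Q))"

definition primary_ideals_of :: "'a::comm_ring_1 set \<Rightarrow> 'a set set" where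
  "primary_ideals_of P = {Q. primary_ideal Q \<and> ideal_radical Q = P}"

definition primary_intersections_of :: "'a::comm_ring_1 set \<Rightarrow> 'a set set" where
  "primary_intersections_of P =
     {I. \<exists>\<Q>. \<Q> \<noteq> {} \<and> \<Q> \<subseteq> primary_ideals_of P \<and> I = \<Inter>\<Q>}"

definition noetherian_ring :: "'a::comm_ring_1 itself \<Rightarrow> bool" where
  "noetherian_ring _ \<longleftrightarrow>
     (\<forall>I :: nat \<Rightarrow> 'a set. (\<forall>n. ring_ideal (I n) \<and> I n \<subseteq> I (Suc n)) \<longrightarrow>
        (\<exists>N. \<forall>n\<ge>N. I n = I N))"

definition local_ring_with :: "'a::comm_ring_1 set \<Rightarrow> bool" where
  "local_ring_with M \<longleftrightarrow> maximal_ideal M \<and> (\<forall>J. maximal_ideal J \<longrightarrow> J = M)"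

text \<open>f : R \<rightarrow> S is (isomorphic to) the localization map R \<rightarrow> R_P: a ring homomorphism
  such that elements outside P become units, every element of S is a fraction
  f a / f s with s outside P, and the kernel consists of the elements killed
  by some s outside P (Atiyah--Macdonald, Cor. 3.2).\<close>
definition is_localization_at :: "'a::comm_ring_1 set \<Rightarrow> ('a \<Rightarrow> 'b::comm_ring_1) \<Rightarrow> bool" where
  "is_localization_at P f \<longleftrightarrow>
     f 1 = 1 \<and> (\<forall>x y. f (x + y) = f x + f y) \<and> (\<forall>x y. f (x * y) = f x * f y) \<and>
     (\<forall>s. s \<notin> P \<longrightarrow> f s dvd 1) \<and>
     (\<forall>x. f x = 0 \<longrightarrow> (\<exists>s. s \<notin> P \<and> s * x = 0)) \<and>
     (\<forall>y. \<exists>a s. s \<notin> P \<and> y * f s = f a)"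

definition zariski_ideals :: "'a::comm_ring_1 set topology" where
  "zariski_ideals = topology (arbitrary union_of
      (\<lambda>U. \<exists>F. finite F \<and> U = {I. ring_ideal I \<and> F \<subseteq> I}))"

text \<open>Constructible topology: coarsest topology on the same points in which every
  open quasi-compact subset is clopen (generated by the subbasis of open
  quasi-compact sets and their complements).\<close>
definition constructible_topology :: "'x topology \<Rightarrow> 'x topology" where
  "constructible_topology X = topology (arbitrary union_of
      (finite intersection_of
         (\<lambda>U. (openin X U \<and> compactin X U) \<or>
              (\<exists>V. openin X V \<and> compactin X V \<and> U = topspace X - V))
       relative_to topspace X))"

end

theory Submission
  imports Defs
begin


lemma id_0: "ring_ideal I \<Longrightarrow> 0 \<in> I" by (simp add: ring_ideal_def)
lemma id_add: "ring_ideal I \<Longrightarrow> x \<in> I \<Longrightarrow> y \<in> I \<Longrightarrow> x + y \<in> I" by (simp add: ring_ideal_def)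
lemma id_mult: "ring_ideal I \<Longrightarrow> x \<in> I \<Longrightarrow> r * x \<in> I" by (simp add: ring_ideal_def)
lemma id_mult2: "ring_ideal I \<Longrightarrow> x \<in> I \<Longrightarrow> x * r \<in> I" by (metis id_mult mult.commute)
lemma id_neg: "ring_ideal I \<Longrightarrow> x \<in> I \<Longrightarrow> - x \<in> I"
  by (metis id_mult mult_minus1)
lemma id_diff: "ring_ideal I \<Longrightarrow> x \<in> I \<Longrightarrow> y \<in> I \<Longrightarrow> x - y \<in> I"
  by (metis id_add id_neg diff_conv_add_uminus)
lemma id_UNIV: "ring_ideal I \<Longrightarrow> 1 \<in> I \<Longrightarrow> I = UNIV"
  by (metis UNIV_eq_I id_mult mult.right_neutral)

lemma prime_pow: "prime_ideal P \<Longrightarrow> x ^ n \<in> P \<Longrightarrow> x \<in> P"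
proof (induction n)
  case 0 then show ?case unfolding prime_ideal_def using id_UNIV by auto
next
  case (Suc n) then show ?case unfolding prime_ideal_def by auto
qed

definition Csat :: "'a::comm_ring_1 set \<Rightarrow> 'a set set" where
  "Csat P = {I. ring_ideal I \<and> I \<noteq> UNIV \<and> (\<forall>s x. s \<notin> P \<and> s * x \<in> I \<longrightarrow> x \<in> I)}"

lemma Csat_sub: "I \<in> Csat P \<Longrightarrow> I \<subseteq> P"
  unfolding Csat_def using id_UNIV by (metis (mono_tags, lifting) mem_Collect_eq mult.right_neutral subsetI)

lemma prime_notin_mult: "prime_ideal P \<Longrightarrow> s \<notin> P \<Longrightarrow> t \<notin> P \<Longrightarrow> s * t \<notin> P"
  unfolding prime_ideal_def by auto

lemma prime_one: "prime_ideal P \<Longrightarrow> 1 \<notin> P"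
  unfolding prime_ideal_def using id_UNIV by auto

lemma chain_union_ideal:
  assumes "C \<noteq> {}" "\<forall>J\<in>C. ring_ideal J" "chain\<^sub>\<subseteq> C"
  shows "ring_ideal (\<Union>C)"
  unfolding ring_ideal_def
proof (intro conjI ballI allI)
  show "0 \<in> \<Union>C" using assms id_0 by blast
next
  fix x y assume "x \<in> \<Union>C" "y \<in> \<Union>C"
  then obtain A B where AB: "A \<in> C" "B \<in> C" "x \<in> A" "y \<in> B" by blast
  from assms(3) AB have "A \<subseteq> B \<or> B \<subseteq> A" unfolding chain_subset_def by blast
  then show "x + y \<in> \<Union>C" using AB assms(2) id_add by (metis UnionI subsetD)
next
  fix r x assume "x \<in> \<Union>C" then show "r * x \<in> \<Union>C" using assms(2) id_mult by blast
qed

lemma zorn_aux: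
  assumes "A0 \<in> \<A>" and "\<And>C. C \<noteq> {} \<Longrightarrow> C \<subseteq> \<A> \<Longrightarrow> chain\<^sub>\<subseteq> C \<Longrightarrow> \<Union>C \<in> \<A>"
  shows "\<exists>M\<in>\<A>. \<forall>X\<in>\<A>. M \<subseteq> X \<longrightarrow> X = M"
proof (rule Zorn_Lemma2, intro ballI)
  fix C assume "C \<in> chains \<A>"
  then have "C \<subseteq> \<A>" "chain\<^sub>\<subseteq> C" unfolding chains_def by auto
  show "\<exists>U\<in>\<A>. \<forall>X\<in>C. X \<subseteq> U"
  proof (cases "C = {}")
    case True then show ?thesis using assms(1) by auto
  next
    case False then show ?thesis using assms(2) \<open>C \<subseteq> \<A>\<close> \<open>chain\<^sub>\<subseteq> C\<close> by blast
  qed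
qed



lemma key_single:
  fixes P :: "'a::comm_ring_1 set"
  assumes noeth: "noetherian_ring TYPE('a)" and pr: "prime_ideal P"
    and I: "I \<in> Csat P" and g: "g \<notin> I"
  shows "\<exists>Q \<in> primary_ideals_of P. I \<subseteq> Q \<and> g \<notin> Q"
proof -
  define \<A> where "\<A> = {J. J \<in> Csat P \<and> I \<subseteq> J \<and> g \<notin> J}"
  have "\<exists>M\<in>\<A>. \<forall>X\<in>\<A>. M \<subseteq> X \<longrightarrow> X = M"
  proof (rule zorn_aux)
    show "I \<in> \<A>" using I g unfolding \<A>_def by auto
  next
    fix C assume C: "C \<noteq> {}" "C \<subseteq> \<A>" "chain\<^sub>\<subseteq> C"
    have ri: "ring_ideal (\<Union>C)" using chain_union_ideal[OF C(1) _ C(3)] C(2)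
      unfolding \<A>_def Csat_def by blast
    have gn: "g \<notin> \<Union>C" using C(2) unfolding \<A>_def by blast
    have sat: "\<forall>s x. s \<notin> P \<and> s * x \<in> \<Union>C \<longrightarrow> x \<in> \<Union>C"
      using C(2) unfolding \<A>_def Csat_def by blast
    have "I \<subseteq> \<Union>C" using C(1,2) unfolding \<A>_def by blast
    then show "\<Union>C \<in> \<A>" using ri gn sat unfolding \<A>_def Csat_def by auto
  qed
  then obtain Q where QA: "Q \<in> \<A>" and Qmax: "\<And>X. X \<in> \<A> \<Longrightarrow> Q \<subseteq> X \<Longrightarrow> X = Q" by blast
  have Qi: "ring_ideal Q" and QU: "Q \<noteq> UNIV" and Qs: "\<And>s x. s \<notin> P \<Longrightarrow> s * x \<in> Q \<Longrightarrow> x \<in> Q"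
    and IQ: "I \<subseteq> Q" and gQ: "g \<notin> Q"
    using QA unfolding \<A>_def Csat_def by auto
  have QP: "Q \<subseteq> P" using Csat_sub QA unfolding \<A>_def by blast
  have M: "\<exists>s q r. s \<notin> P \<and> q \<in> Q \<and> s * g = q + r * x" if xQ: "x \<notin> Q" for x
  proof (rule ccontr)
    assume nex: "\<not> ?thesis"
    define K where "K = {y. \<exists>s q r. s \<notin> P \<and> q \<in> Q \<and> s * y = q + r * x}"
    have gK: "g \<notin> K" using nex unfolding K_def by auto
    have Ki: "ring_ideal K" unfolding ring_ideal_def
    proof (intro conjI ballI allI)
      show "0 \<in> K" unfolding K_def
        by (rule CollectI, rule exI[of _ 1], rule exI[of _ 0], rule exI[of _ 0])
          (simp add: prime_one[OF pr] id_0[OF Qi])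
    next
      fix y1 y2 assume "y1 \<in> K" "y2 \<in> K"
      then obtain s1 q1 r1 s2 q2 r2 where h: "s1 \<notin> P" "q1 \<in> Q" "s1 * y1 = q1 + r1 * x"
        "s2 \<notin> P" "q2 \<in> Q" "s2 * y2 = q2 + r2 * x" unfolding K_def by blast
      have "(s1 * s2) * (y1 + y2) = s2 * (s1 * y1) + s1 * (s2 * y2)" by (simp add: algebra_simps)
      also have "\<dots> = s2 * (q1 + r1 * x) + s1 * (q2 + r2 * x)" using h(3,6) by simp
      also have "\<dots> = (s2 * q1 + s1 * q2) + (s2 * r1 + s1 * r2) * x" by (simp add: algebra_simps)
      finally have "(s1 * s2) * (y1 + y2) = (s2 * q1 + s1 * q2) + (s2 * r1 + s1 * r2) * x" .
      moreover have "s1 * s2 \<notin> P" using prime_notin_mult[OF pr h(1,4)] .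
      moreover have "s2 * q1 + s1 * q2 \<in> Q" using h Qi id_add id_mult by blast
      ultimately show "y1 + y2 \<in> K" unfolding K_def by blast
    next
      fix r y assume "y \<in> K"
      then obtain s q r' where h: "s \<notin> P" "q \<in> Q" "s * y = q + r' * x" unfolding K_def by blast
      have "s * (r * y) = r * (s * y)" by (simp add: algebra_simps)
      also have "\<dots> = r * q + (r * r') * x" using h(3) by (simp add: algebra_simps)
      finally have "s * (r * y) = r * q + (r * r') * x" .
      then show "r * y \<in> K" unfolding K_def using h Qi id_mult by blast
    qed
    have Ksat: "\<forall>t y. t \<notin> P \<and> t * y \<in> K \<longrightarrow> y \<in> K"
    proof (intro allI impI)
      fix t y assume "t \<notin> P \<and> t * y \<in> K"
      then obtain s q r where h: "t \<notin> P" "s \<notin> P" "q \<in> Q" "s * (t * y) = q + r * x" unfolding K_def by blast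
      have "(s * t) * y = q + r * x" using h(4) by (simp add: mult.assoc)
      then show "y \<in> K" unfolding K_def using h prime_notin_mult[OF pr h(2,1)] by blast
    qed
    have QK: "Q \<subseteq> K" unfolding K_def
    proof
      fix q assume "q \<in> Q" then show "q \<in> {y. \<exists>s q r. s \<notin> P \<and> q \<in> Q \<and> s * y = q + r * x}"
        by (intro CollectI exI[of _ 1] exI[of _ q] exI[of _ 0]) (simp add: prime_one[OF pr])
    qed
    have xK: "x \<in> K" unfolding K_def
      by (intro CollectI exI[of _ 1] exI[of _ 0] exI[of _ 1]) (simp add: prime_one[OF pr] id_0[OF Qi])
    have "K \<noteq> UNIV" using gK by auto
    then have "K \<in> \<A>" unfolding \<A>_def Csat_def using Ki Ksat gK QK IQ by auto
    then have "K = Q" using Qmax QK by blast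
    then show False using xK xQ by simp
  qed
  have primary: "\<exists>n. y ^ n \<in> Q" if xy: "x * y \<in> Q" and xQ: "x \<notin> Q" for x y
  proof -
    define Cn where "Cn = (\<lambda>n. {z. z * y ^ n \<in> Q})"
    have "\<forall>n. ring_ideal (Cn n) \<and> Cn n \<subseteq> Cn (Suc n)"
    proof
      fix n
      have "ring_ideal (Cn n)" unfolding ring_ideal_def Cn_def
      proof (intro conjI ballI allI)
        show "0 \<in> {z. z * y ^ n \<in> Q}" using id_0[OF Qi] by simp
      next
        fix a b assume "a \<in> {z. z * y ^ n \<in> Q}" "b \<in> {z. z * y ^ n \<in> Q}"
        then have "a * y ^ n + b * y ^ n \<in> Q" using id_add[OF Qi] by simp
        then show "a + b \<in> {z. z * y ^ n \<in> Q}" by (simp add: distrib_right)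
      next
        fix r a assume "a \<in> {z. z * y ^ n \<in> Q}"
        then have "r * (a * y ^ n) \<in> Q" using id_mult[OF Qi] by simp
        then show "r * a \<in> {z. z * y ^ n \<in> Q}" by (simp add: mult.assoc)
      qed
      moreover have "Cn n \<subseteq> Cn (Suc n)" unfolding Cn_def
      proof
        fix a assume "a \<in> {z. z * y ^ n \<in> Q}"
        then have "(a * y ^ n) * y \<in> Q" using id_mult2[OF Qi] by simp
        then show "a \<in> {z. z * y ^ Suc n \<in> Q}" by (simp add: algebra_simps)
      qed
      ultimately show "ring_ideal (Cn n) \<and> Cn n \<subseteq> Cn (Suc n)" by blast
    qed
    then obtain N where N: "\<And>n. n \<ge> N \<Longrightarrow> Cn n = Cn N"
      using noeth unfolding noetherian_ring_def by blast
    show ?thesis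
    proof (rule ccontr)
      assume "\<not> ?thesis"
      then have yN: "y ^ N \<notin> Q" by blast
      obtain s1 q1 r1 where h1: "s1 \<notin> P" "q1 \<in> Q" "s1 * g = q1 + r1 * x" using M[OF xQ] by blast
      obtain s2 q2 r2 where h2: "s2 \<notin> P" "q2 \<in> Q" "s2 * g = q2 + r2 * y ^ N" using M[OF yN] by blast
      define z where "z = s1 * s2 * g"
      have "z = s2 * (s1 * g)" unfolding z_def by (simp add: algebra_simps)
      also have "\<dots> = s2 * q1 + (s2 * r1) * x" using h1(3) by (simp add: algebra_simps)
      finally have z1: "z = s2 * q1 + (s2 * r1) * x" .
      have "z = s1 * (s2 * g)" unfolding z_def by (simp add: algebra_simps)
      also have "\<dots> = s1 * q2 + (s1 * r2) * y ^ N" using h2(3) by (simp add: algebra_simps)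
      finally have z2: "z = s1 * q2 + (s1 * r2) * y ^ N" .
      have zy: "z * y \<in> Q"
      proof -
        have "z * y = (s2 * q1) * y + (s2 * r1) * (x * y)" using z1 by (simp add: algebra_simps)
        then show ?thesis using Qi h1(2) xy id_add id_mult id_mult2 by metis
      qed
      have "(s1 * r2) * y ^ Suc N = z * y - (s1 * q2) * y" using z2 by (simp add: algebra_simps)
      also have "\<dots> \<in> Q" using zy h2(2) Qi id_diff id_mult2 id_mult by metis
      finally have "s1 * r2 \<in> Cn (Suc N)" unfolding Cn_def by simp
      then have "s1 * r2 \<in> Cn N" using N[of "Suc N"] by simp
      then have "(s1 * r2) * y ^ N \<in> Q" unfolding Cn_def by simp
      then have "z \<in> Q" using z2 h2(2) Qi id_add id_mult by metis
      then have "(s1 * s2) * g \<in> Q" unfolding z_def .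
      then have "g \<in> Q" using Qs prime_notin_mult[OF pr h1(1) h2(1)] by blast
      then show False using gQ by simp
    qed
  qed
  have Pg: "x * g \<in> Q" if xP: "x \<in> P" for x
  proof (rule ccontr)
    assume nx: "x * g \<notin> Q"
    obtain s q r where h: "s \<notin> P" "q \<in> Q" "s * g = q + r * (x * g)" using M[OF nx] by blast
    have "(s - r * x) * g = q" using h(3) by (simp add: algebra_simps)
    moreover have "s - r * x \<notin> P"
    proof
      assume "s - r * x \<in> P"
      moreover have "r * x \<in> P" using xP pr unfolding prime_ideal_def using id_mult by blast
      ultimately have "(s - r * x) + r * x \<in> P" using pr unfolding prime_ideal_def using id_add by blast
      then show False using h(1) by simp
    qed
    ultimately have "g \<in> Q" using Qs h(2) by metis
    then show False using gQ by simp
  qed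
  have prim: "primary_ideal Q" unfolding primary_ideal_def using Qi QU primary by blast
  have rad: "ideal_radical Q = P"
  proof
    show "ideal_radical Q \<subseteq> P" unfolding ideal_radical_def using QP prime_pow[OF pr] by blast
  next
    show "P \<subseteq> ideal_radical Q"
    proof
      fix x assume "x \<in> P"
      then have "g * x \<in> Q" using Pg by (metis mult.commute)
      then show "x \<in> ideal_radical Q" using primary gQ unfolding ideal_radical_def by blast
    qed
  qed
  show ?thesis using prim rad IQ gQ unfolding primary_ideals_of_def by blast
qed



lemma PP_prime: assumes pr: "prime_ideal P" shows "P \<in> primary_ideals_of P"
proof -
  have "primary_ideal P" unfolding primary_ideal_def
  proof (intro conjI allI impI)
    show "ring_ideal P" "P \<noteq> UNIV" using pr unfolding prime_ideal_def by auto
  next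
    fix x y assume "x * y \<in> P"
    then have "x \<in> P \<or> y ^ 1 \<in> P" using pr unfolding prime_ideal_def by simp
    then show "x \<in> P \<or> (\<exists>n. y ^ n \<in> P)" by blast
  qed
  moreover have "ideal_radical P = P"
  proof
    show "ideal_radical P \<subseteq> P" unfolding ideal_radical_def using prime_pow[OF pr] by blast
    show "P \<subseteq> ideal_radical P" unfolding ideal_radical_def by (auto intro: exI[of _ 1])
  qed
  ultimately show ?thesis unfolding primary_ideals_of_def by blast
qed

lemma PP_Csat:
  assumes pr: "prime_ideal P" and Q: "Q \<in> primary_ideals_of P" shows "Q \<in> Csat P"
proof -
  have Qp: "primary_ideal Q" and rad: "ideal_radical Q = P" using Q unfolding primary_ideals_of_def by auto
  have "x \<in> Q" if "s \<notin> P" "s * x \<in> Q" for s x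
  proof -
    have "x * s \<in> Q" using that by (simp add: mult.commute)
    then have "x \<in> Q \<or> (\<exists>n. s ^ n \<in> Q)" using Qp unfolding primary_ideal_def by blast
    then show ?thesis using rad that(1) unfolding ideal_radical_def by blast
  qed
  then show ?thesis using Qp unfolding Csat_def primary_ideal_def by blast
qed

lemma PP_Int:
  assumes Q1: "Q1 \<in> primary_ideals_of P" and Q2: "Q2 \<in> primary_ideals_of P"
  shows "Q1 \<inter> Q2 \<in> primary_ideals_of P"
proof -
  have p1: "primary_ideal Q1" and r1: "ideal_radical Q1 = P" and
       p2: "primary_ideal Q2" and r2: "ideal_radical Q2 = P"
    using Q1 Q2 unfolding primary_ideals_of_def by auto
  have i1: "ring_ideal Q1" and i2: "ring_ideal Q2" using p1 p2 unfolding primary_ideal_def by auto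
  have pw: "y ^ (n + m) \<in> Q1 \<inter> Q2" if "y ^ n \<in> Q1" "y ^ m \<in> Q2" for y n m
  proof -
    have a1: "y ^ m * y ^ n \<in> Q1" using id_mult[OF i1 that(1)] .
    have a2: "y ^ n * y ^ m \<in> Q2" using id_mult[OF i2 that(2)] .
    have e1: "y ^ (n + m) = y ^ n * y ^ m" by (simp add: power_add)
    have e2: "y ^ (n + m) = y ^ m * y ^ n" by (simp add: power_add mult.commute)
    show ?thesis using a1 a2 e1 e2 by (metis IntI)
  qed
  have ri: "ring_ideal (Q1 \<inter> Q2)" using i1 i2 id_0 id_add id_mult unfolding ring_ideal_def[of "Q1 \<inter> Q2"] by blast
  have pr: "Q1 \<inter> Q2 \<noteq> UNIV" using p1 unfolding primary_ideal_def by auto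
  have prim: "x \<in> Q1 \<inter> Q2 \<or> (\<exists>n. y ^ n \<in> Q1 \<inter> Q2)" if "x * y \<in> Q1 \<inter> Q2" for x y
  proof (cases "x \<in> Q1 \<inter> Q2")
    case False
    have "\<exists>n. y ^ n \<in> Q1 \<or> y ^ n \<in> Q2" using False that p1 p2 unfolding primary_ideal_def by blast
    then have "y \<in> P" using r1 r2 unfolding ideal_radical_def by blast
    then obtain n m where "y ^ n \<in> Q1" "y ^ m \<in> Q2" using r1 r2 unfolding ideal_radical_def by blast
    then show ?thesis using pw by blast
  qed simp
  have rad: "ideal_radical (Q1 \<inter> Q2) = P"
  proof
    show "ideal_radical (Q1 \<inter> Q2) \<subseteq> P" using r1 unfolding ideal_radical_def by blast
  next
    show "P \<subseteq> ideal_radical (Q1 \<inter> Q2)"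
    proof
      fix x assume "x \<in> P"
      then obtain n m where "x ^ n \<in> Q1" "x ^ m \<in> Q2" using r1 r2 unfolding ideal_radical_def by blast
      then show "x \<in> ideal_radical (Q1 \<inter> Q2)" using pw unfolding ideal_radical_def by blast
    qed
  qed
  show ?thesis unfolding primary_ideals_of_def primary_ideal_def using ri pr prim rad by blast
qed

lemma key_finite:
  fixes P :: "'a::comm_ring_1 set"
  assumes noeth: "noetherian_ring TYPE('a)" and pr: "prime_ideal P"
    and I: "I \<in> Csat P" and G: "finite G" "G \<inter> I = {}"
  shows "\<exists>Q \<in> primary_ideals_of P. I \<subseteq> Q \<and> G \<inter> Q = {}"
  using G
proof (induction G rule: finite_induct)
  case empty
  then show ?case using PP_prime[OF pr] Csat_sub[OF I] by blast
next
  case (insert g G)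
  then obtain Q1 where q1: "Q1 \<in> primary_ideals_of P" "I \<subseteq> Q1" "G \<inter> Q1 = {}" by blast
  obtain Q2 where q2: "Q2 \<in> primary_ideals_of P" "I \<subseteq> Q2" "g \<notin> Q2"
    using key_single[OF noeth pr I, of g] insert.prems by blast
  have "Q1 \<inter> Q2 \<in> primary_ideals_of P" using PP_Int[OF q1(1) q2(1)] .
  moreover have "I \<subseteq> Q1 \<inter> Q2" using q1 q2 by blast
  moreover have "insert g G \<inter> (Q1 \<inter> Q2) = {}" using q1 q2 by blast
  ultimately show ?case by blast
qed

lemma intersections_eq:
  fixes P :: "'a::comm_ring_1 set"
  assumes noeth: "noetherian_ring TYPE('a)" and pr: "prime_ideal P"
  shows "primary_intersections_of P = Csat P"
proof
  show "primary_intersections_of P \<subseteq> Csat P"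
  proof
    fix I assume "I \<in> primary_intersections_of P"
    then obtain \<Q> where Q: "\<Q> \<noteq> {}" "\<Q> \<subseteq> primary_ideals_of P" "I = \<Inter>\<Q>"
      unfolding primary_intersections_of_def by blast
    have C: "\<And>Q. Q \<in> \<Q> \<Longrightarrow> Q \<in> Csat P" using Q(2) PP_Csat[OF pr] by blast
    have CI: "\<And>Q. Q \<in> \<Q> \<Longrightarrow> ring_ideal Q" using C unfolding Csat_def by blast
    have CU: "\<And>Q. Q \<in> \<Q> \<Longrightarrow> Q \<noteq> UNIV" using C unfolding Csat_def by blast
    have CS: "\<And>Q s x. Q \<in> \<Q> \<Longrightarrow> s \<notin> P \<Longrightarrow> s * x \<in> Q \<Longrightarrow> x \<in> Q" using C unfolding Csat_def by blast
    have "ring_ideal (\<Inter>\<Q>)" unfolding ring_ideal_def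
    proof (intro conjI ballI allI)
      show "0 \<in> \<Inter>\<Q>" using CI id_0 by blast
      show "x + y \<in> \<Inter>\<Q>" if "x \<in> \<Inter>\<Q>" "y \<in> \<Inter>\<Q>" for x y
      proof
        fix Q assume "Q \<in> \<Q>" then show "x + y \<in> Q" using that CI id_add by blast
      qed
      show "r * x \<in> \<Inter>\<Q>" if "x \<in> \<Inter>\<Q>" for r x
      proof
        fix Q assume "Q \<in> \<Q>" then show "r * x \<in> Q" using that CI id_mult by blast
      qed
    qed
    moreover have "\<Inter>\<Q> \<noteq> UNIV"
    proof -
      obtain Q where "Q \<in> \<Q>" using Q(1) by blast
      then show ?thesis using CU by blast
    qed
    moreover have "\<forall>s x. s \<notin> P \<and> s * x \<in> \<Inter>\<Q> \<longrightarrow> x \<in> \<Inter>\<Q>" using CS by blast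
    ultimately show "I \<in> Csat P" unfolding Csat_def using Q(3) by blast
  qed
next
  show "Csat P \<subseteq> primary_intersections_of P"
  proof
    fix I assume I: "I \<in> Csat P"
    define \<Q> where "\<Q> = {Q \<in> primary_ideals_of P. I \<subseteq> Q}"
    have "P \<in> \<Q>" unfolding \<Q>_def using PP_prime[OF pr] Csat_sub[OF I] by blast
    moreover have "I = \<Inter>\<Q>"
    proof
      show "I \<subseteq> \<Inter>\<Q>" unfolding \<Q>_def by blast
      show "\<Inter>\<Q> \<subseteq> I"
      proof
        fix g assume g: "g \<in> \<Inter>\<Q>"
        show "g \<in> I"
        proof (rule ccontr)
          assume "g \<notin> I"
          then obtain Q where "Q \<in> primary_ideals_of P" "I \<subseteq> Q" "g \<notin> Q" using key_single[OF noeth pr I] by blast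
          then show False using g unfolding \<Q>_def by blast
        qed
      qed
    qed
    moreover have "\<Q> \<subseteq> primary_ideals_of P" unfolding \<Q>_def by blast
    ultimately show "I \<in> primary_intersections_of P"
      unfolding primary_intersections_of_def by (intro CollectI exI[of _ \<Q>]) blast
  qed
qed


lemma localization_image:
  fixes P :: "'a::comm_ring_1 set" and f :: "'a \<Rightarrow> 'b::comm_ring_1"
  assumes pr: "prime_ideal P" and loc: "is_localization_at P f"
  shows "(\<lambda>J. f -` J) ` (proper_ideals :: 'b set set) = Csat P"
proof -
  have f1: "f 1 = 1" and fadd: "\<And>x y. f (x + y) = f x + f y" and fmul: "\<And>x y. f (x * y) = f x * f y"
    and funit: "\<And>s. s \<notin> P \<Longrightarrow> f s dvd 1"
    and fker: "\<And>x. f x = 0 \<Longrightarrow> \<exists>s. s \<notin> P \<and> s * x = 0"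
    and fsurj: "\<And>y. \<exists>a s. s \<notin> P \<and> y * f s = f a"
    using loc unfolding is_localization_at_def by auto
  have f0: "f 0 = 0" using fadd[of 0 0] by simp
  have fminus: "f (- x) = - f x" for x
  proof -
    have "f x + f (- x) = 0" using fadd[of x "- x"] f0 by simp
    then show ?thesis using add.inverse_unique by metis
  qed
  have fdiff: "f (x - y) = f x - f y" for x y using fadd[of x "- y"] fminus by simp
  show ?thesis
  proof
    show "(\<lambda>J. f -` J) ` (proper_ideals :: 'b set set) \<subseteq> Csat P"
    proof
      fix I assume "I \<in> (\<lambda>J. f -` J) ` (proper_ideals :: 'b set set)"
      then obtain J :: "'b set" where J: "ring_ideal J" "J \<noteq> UNIV" "I = f -` J"
        unfolding proper_ideals_def by blast
      have "ring_ideal I" unfolding ring_ideal_def J(3)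
        using J(1) unfolding ring_ideal_def by (simp add: f0 fadd fmul)
      moreover have "I \<noteq> UNIV"
      proof
        assume "I = UNIV"
        then have "f 1 \<in> J" using J(3) by blast
        then show False using J(1,2) f1 id_UNIV by metis
      qed
      moreover have "x \<in> I" if sP: "s \<notin> P" and sx: "s * x \<in> I" for s x
      proof -
        obtain u where u: "1 = f s * u" using funit[OF sP] by (auto elim: dvdE)
        have "f s * f x \<in> J" using sx J(3) fmul by simp
        then have "u * (f s * f x) \<in> J" using id_mult[OF J(1)] by blast
        moreover have "u * (f s * f x) = (f s * u) * f x" by (simp add: algebra_simps)
        moreover have "(f s * u) * f x = f x" using u by simp
        ultimately show ?thesis using J(3) by simp
      qed
      ultimately show "I \<in> Csat P" unfolding Csat_def by blast
    qed
  next
    show "Csat P \<subseteq> (\<lambda>J. f -` J) ` (proper_ideals :: 'b set set)"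
    proof
      fix I assume I: "I \<in> Csat P"
      have Ii: "ring_ideal I" and IU: "I \<noteq> UNIV" and Is: "\<And>s x. s \<notin> P \<Longrightarrow> s * x \<in> I \<Longrightarrow> x \<in> I"
        using I unfolding Csat_def by auto
      define J where "J = {y. \<exists>a s. a \<in> I \<and> s \<notin> P \<and> y * f s = f a}"
      have bck: "x \<in> I" if "a \<in> I" "s \<notin> P" "f x * f s = f a" for x a s
      proof -
        have "f (x * s - a) = 0" using that(3) by (simp add: fdiff fmul)
        then obtain t where t: "t \<notin> P" "t * (x * s - a) = 0" using fker by blast
        have "t * a \<in> I" using id_mult[OF Ii that(1)] .
        moreover have "(t * s) * x = t * a" using t(2) by (simp add: algebra_simps)
        ultimately have "(t * s) * x \<in> I" by simp
        then show ?thesis using Is prime_notin_mult[OF pr t(1) that(2)] by blast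
      qed
      have Ji: "ring_ideal J" unfolding ring_ideal_def
      proof (intro conjI ballI allI)
        show "0 \<in> J" unfolding J_def using id_0[OF Ii] prime_one[OF pr] f0
          by (intro CollectI exI[of _ 0] exI[of _ 1]) simp
      next
        fix y1 y2 assume "y1 \<in> J" "y2 \<in> J"
        then obtain a1 s1 a2 s2 where h: "a1 \<in> I" "s1 \<notin> P" "y1 * f s1 = f a1"
          "a2 \<in> I" "s2 \<notin> P" "y2 * f s2 = f a2" unfolding J_def by blast
        have "(y1 + y2) * f (s1 * s2) = (y1 * f s1) * f s2 + (y2 * f s2) * f s1"
          by (simp add: fmul algebra_simps)
        also have "\<dots> = f (a1 * s2 + a2 * s1)" using h by (simp add: fadd fmul)
        finally have "(y1 + y2) * f (s1 * s2) = f (a1 * s2 + a2 * s1)" .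
        moreover have "a1 * s2 + a2 * s1 \<in> I" using h Ii id_add id_mult2 by blast
        ultimately show "y1 + y2 \<in> J" unfolding J_def using prime_notin_mult[OF pr h(2,5)] by blast
      next
        fix r y assume "y \<in> J"
        then obtain a s where h: "a \<in> I" "s \<notin> P" "y * f s = f a" unfolding J_def by blast
        obtain b t where h2: "t \<notin> P" "r * f t = f b" using fsurj by blast
        have "(r * y) * f (t * s) = (r * f t) * (y * f s)" by (simp add: fmul algebra_simps)
        also have "\<dots> = f (b * a)" using h h2 by (simp add: fmul)
        finally have "(r * y) * f (t * s) = f (b * a)" .
        moreover have "b * a \<in> I" using id_mult[OF Ii h(1)] .
        ultimately show "r * y \<in> J" unfolding J_def using prime_notin_mult[OF pr h2(1) h(2)] by blast
      qed
      have JU: "J \<noteq> UNIV"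
      proof
        assume "J = UNIV"
        then obtain a s where h: "a \<in> I" "s \<notin> P" "1 * f s = f a" unfolding J_def by blast
        then have "f 1 * f s = f a" using f1 by simp
        then have "1 \<in> I" using bck[OF h(1,2)] by blast
        then show False using IU id_UNIV[OF Ii] by blast
      qed
      have "f -` J = I"
      proof
        show "f -` J \<subseteq> I" unfolding J_def using bck by blast
        show "I \<subseteq> f -` J" unfolding J_def using prime_one[OF pr] f1 by force
      qed
      then show "I \<in> (\<lambda>J. f -` J) ` (proper_ideals :: 'b set set)"
        unfolding proper_ideals_def using Ji JU by blast
    qed
  qed
qed

lemma maximal_prime:
  assumes "maximal_ideal M" shows "prime_ideal M"
proof -
  have Mi: "ring_ideal M" and MU: "M \<noteq> UNIV" and Mm: "\<And>J. ring_ideal J \<Longrightarrow> M \<subseteq> J \<Longrightarrow> J = M \<or> J = UNIV"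
    using assms unfolding maximal_ideal_def by auto
  have "a \<in> M \<or> b \<in> M" if ab: "a * b \<in> M" for a b
  proof (cases "a \<in> M")
    case False
    define J where "J = {m + r * a | m r. m \<in> M}"
    have Ji: "ring_ideal J" unfolding ring_ideal_def J_def
    proof (intro conjI ballI allI)
      show "0 \<in> {m + r * a |m r. m \<in> M}" using id_0[OF Mi]
        by (intro CollectI exI[of _ 0] exI[of _ 0]) simp
    next
      fix x y assume "x \<in> {m + r * a |m r. m \<in> M}" "y \<in> {m + r * a |m r. m \<in> M}"
      then obtain m1 r1 m2 r2 where "x = m1 + r1 * a" "y = m2 + r2 * a" "m1 \<in> M" "m2 \<in> M" by blast
      then show "x + y \<in> {m + r * a |m r. m \<in> M}" using id_add[OF Mi]
        by (intro CollectI exI[of _ "m1 + m2"] exI[of _ "r1 + r2"]) (simp add: algebra_simps)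
    next
      fix r x assume "x \<in> {m + r * a |m r. m \<in> M}"
      then obtain m1 r1 where "x = m1 + r1 * a" "m1 \<in> M" by blast
      then show "r * x \<in> {m + r * a |m r. m \<in> M}" using id_mult[OF Mi]
        by (intro CollectI exI[of _ "r * m1"] exI[of _ "r * r1"]) (simp add: algebra_simps)
    qed
    have "M \<subseteq> J" unfolding J_def
    proof
      fix m assume "m \<in> M" then show "m \<in> {m + r * a |m r. m \<in> M}"
        by (intro CollectI exI[of _ m] exI[of _ 0]) simp
    qed
    moreover have "a \<in> J" unfolding J_def using id_0[OF Mi]
      by (intro CollectI exI[of _ 0] exI[of _ 1]) simp
    ultimately have "J = UNIV" using Mm[OF Ji] False by blast
    then obtain m r where h: "1 = m + r * a" "m \<in> M" unfolding J_def by blast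
    have "b * (m + r * a) = b * m + r * (a * b)" by (simp add: algebra_simps)
    then have "b = b * m + r * (a * b)" using h(1) by simp
    moreover have "b * m + r * (a * b) \<in> M" using h(2) ab id_add[OF Mi] id_mult[OF Mi] id_mult2[OF Mi] by blast
    ultimately show ?thesis by simp
  qed simp
  then show ?thesis unfolding prime_ideal_def using Mi MU by blast
qed

lemma local_unit:
  assumes loc: "local_ring_with M" and s: "s \<notin> M"
  shows "\<exists>u. s * u = 1"
proof (rule ccontr)
  assume nu: "\<not> ?thesis"
  define S where "S = {s * r | r. True}"
  have Si: "ring_ideal S" unfolding ring_ideal_def
  proof (intro conjI ballI allI)
    show "0 \<in> S" unfolding S_def by (auto intro: exI[of _ 0])
  next
    fix x y assume "x \<in> S" "y \<in> S"
    then obtain r1 r2 where "x = s * r1" "y = s * r2" unfolding S_def by blast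
    then have "x + y = s * (r1 + r2)" by (simp add: algebra_simps)
    then show "x + y \<in> S" unfolding S_def by blast
  next
    fix r x assume "x \<in> S"
    then obtain r1 where "x = s * r1" unfolding S_def by blast
    then have "r * x = s * (r * r1)" by (simp add: algebra_simps)
    then show "r * x \<in> S" unfolding S_def by blast
  qed
  have "1 \<notin> S" using nu unfolding S_def by auto
  define \<A> where "\<A> = {J. ring_ideal J \<and> 1 \<notin> J \<and> S \<subseteq> J}"
  have "\<exists>N\<in>\<A>. \<forall>X\<in>\<A>. N \<subseteq> X \<longrightarrow> X = N"
  proof (rule zorn_aux)
    show "S \<in> \<A>" using Si \<open>1 \<notin> S\<close> unfolding \<A>_def by blast
  next
    fix C assume C: "C \<noteq> {}" "C \<subseteq> \<A>" "chain\<^sub>\<subseteq> C"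
    have "ring_ideal (\<Union>C)" using chain_union_ideal[OF C(1) _ C(3)] C(2) unfolding \<A>_def by blast
    then show "\<Union>C \<in> \<A>" using C(1,2) unfolding \<A>_def by blast
  qed
  then obtain N where NA: "N \<in> \<A>" and Nmax: "\<And>X. X \<in> \<A> \<Longrightarrow> N \<subseteq> X \<Longrightarrow> X = N" by blast
  have "maximal_ideal N" unfolding maximal_ideal_def
  proof (intro conjI allI impI)
    show "ring_ideal N" "N \<noteq> UNIV" using NA unfolding \<A>_def by auto
  next
    fix J assume "ring_ideal J \<and> N \<subseteq> J"
    then show "J = N \<or> J = UNIV" using Nmax NA id_UNIV unfolding \<A>_def by blast
  qed
  then have "N = M" using loc unfolding local_ring_with_def by blast
  moreover have "s \<in> S" unfolding S_def by (auto intro: exI[of _ 1])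
  ultimately show False using NA s unfolding \<A>_def by blast
qed

lemma local_Csat:
  assumes loc: "local_ring_with M"
  shows "Csat M = proper_ideals"
proof
  show "Csat M \<subseteq> proper_ideals" unfolding Csat_def proper_ideals_def by blast
next
  show "proper_ideals \<subseteq> Csat M"
  proof
    fix I assume "I \<in> (proper_ideals :: 'a set set)"
    then have Ii: "ring_ideal I" and IU: "I \<noteq> UNIV" unfolding proper_ideals_def by auto
    have "x \<in> I" if sM: "s \<notin> M" and sx: "s * x \<in> I" for s x
    proof -
      obtain u where "s * u = 1" using local_unit[OF loc sM] by blast
      moreover have "u * (s * x) = (s * u) * x" by (simp add: algebra_simps)
      ultimately have "x = u * (s * x)" by simp
      then show ?thesis using id_mult[OF Ii sx, of u] by simp
    qed
    then show "I \<in> Csat M" unfolding Csat_def using Ii IU by blast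
  qed
qed



definition basic :: "'a::comm_ring_1 set \<Rightarrow> 'a set set" where
  "basic F = {I. ring_ideal I \<and> F \<subseteq> I}"

definition BP :: "'a::comm_ring_1 set set \<Rightarrow> bool" where
  "BP U \<longleftrightarrow> (\<exists>F. finite F \<and> U = basic F)"

lemma zar_openin: "openin zariski_ideals = arbitrary union_of (BP :: 'a::comm_ring_1 set set \<Rightarrow> bool)"
proof -
  have eq: "(\<lambda>U. \<exists>F. finite F \<and> U = {I. ring_ideal I \<and> F \<subseteq> I}) = (BP :: 'a set set \<Rightarrow> bool)"
    unfolding BP_def basic_def by (rule refl)
  have "istopology (arbitrary union_of (BP :: 'a set set \<Rightarrow> bool))"
  proof (rule istopology_base)
    fix S T :: "'a set set" assume "BP S" "BP T"
    then obtain F G where "finite F" "S = basic F" "finite G" "T = basic G" unfolding BP_def by blast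
    then have "S \<inter> T = basic (F \<union> G)" "finite (F \<union> G)" unfolding basic_def by auto
    then show "BP (S \<inter> T)" unfolding BP_def by blast
  qed
  then show ?thesis unfolding zariski_ideals_def eq by simp
qed

lemma BP_basic: "finite F \<Longrightarrow> BP (basic F)" unfolding BP_def by blast

lemma zar_open_basic: "finite F \<Longrightarrow> openin zariski_ideals (basic F)"
  unfolding zar_openin by (rule arbitrary_union_of_inc, rule BP_basic)

lemma zar_open_sub: "openin zariski_ideals U \<Longrightarrow> U \<subseteq> {I. ring_ideal I}"
  unfolding zar_openin union_of_def BP_def basic_def by blast

lemma zar_topspace: "topspace (zariski_ideals :: 'a::comm_ring_1 set topology) = {I. ring_ideal I}"
proof
  show "topspace (zariski_ideals :: 'a set topology) \<subseteq> {I. ring_ideal I}"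
    using zar_open_sub[OF openin_topspace] .
  have "openin (zariski_ideals :: 'a set topology) (basic {})" by (rule zar_open_basic) simp
  then have "basic {} \<subseteq> topspace (zariski_ideals :: 'a set topology)" by (rule openin_subset)
  then show "{I. ring_ideal I} \<subseteq> topspace (zariski_ideals :: 'a set topology)" unfolding basic_def by simp
qed

lemma zar_open_point:
  assumes "openin zariski_ideals U" "I \<in> U"
  shows "\<exists>F. finite F \<and> F \<subseteq> I \<and> basic F \<subseteq> U"
proof -
  obtain \<U> where "\<U> \<subseteq> Collect BP" "\<Union>\<U> = U" using assms(1) unfolding zar_openin union_of_def by blast
  then obtain V where "V \<in> \<U>" "BP V" "I \<in> V" using assms(2) by blast
  then obtain F where F: "finite F" "V = basic F" unfolding BP_def by blast
  have "F \<subseteq> I" using \<open>I \<in> V\<close> F(2) unfolding basic_def by blast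
  moreover have "basic F \<subseteq> U" using F(2) \<open>V \<in> \<U>\<close> \<open>\<Union>\<U> = U\<close> by blast
  ultimately show ?thesis using F(1) by blast
qed

lemma basic_compact:
  assumes "finite F" shows "compactin zariski_ideals (basic F)"
  unfolding compactin_def
proof (intro conjI allI impI)
  show "basic F \<subseteq> topspace zariski_ideals" unfolding zar_topspace basic_def by blast
next
  fix \<U> assume A: "(\<forall>U\<in>\<U>. openin zariski_ideals U) \<and> basic F \<subseteq> \<Union>\<U>"
  define I0 where "I0 = \<Inter>{J. ring_ideal J \<and> F \<subseteq> J}"
  have "ring_ideal I0" unfolding ring_ideal_def
  proof (intro conjI ballI allI)
    show "0 \<in> I0" unfolding I0_def using id_0 by blast
    show "x + y \<in> I0" if xy: "x \<in> I0" "y \<in> I0" for x y unfolding I0_def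
    proof
      fix J assume J: "J \<in> {J. ring_ideal J \<and> F \<subseteq> J}"
      then have "x \<in> J" "y \<in> J" using xy unfolding I0_def by blast+
      then show "x + y \<in> J" using J id_add by blast
    qed
    show "r * x \<in> I0" if xx: "x \<in> I0" for r x unfolding I0_def
    proof
      fix J assume J: "J \<in> {J. ring_ideal J \<and> F \<subseteq> J}"
      then have "x \<in> J" using xx unfolding I0_def by blast
      then show "r * x \<in> J" using J id_mult by blast
    qed
  qed
  moreover have "F \<subseteq> I0" unfolding I0_def by blast
  ultimately have "I0 \<in> basic F" unfolding basic_def by blast
  then obtain U where U: "U \<in> \<U>" "I0 \<in> U" using A by blast
  have "openin zariski_ideals U" using A U(1) by blast
  then obtain G where G: "finite G" "G \<subseteq> I0" "basic G \<subseteq> U" using zar_open_point[OF _ U(2)] by blast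
  have "basic F \<subseteq> basic G"
  proof
    fix J assume "J \<in> basic F"
    then have "I0 \<subseteq> J" unfolding basic_def I0_def by blast
    then show "J \<in> basic G" using G(2) \<open>J \<in> basic F\<close> unfolding basic_def by blast
  qed
  then show "\<exists>\<F>. finite \<F> \<and> \<F> \<subseteq> \<U> \<and> basic F \<subseteq> \<Union>\<F>"
  proof (intro exI[of _ "{U}"] conjI)
    show "basic F \<subseteq> \<Union>{U}" using \<open>basic F \<subseteq> basic G\<close> G(3) by simp
  qed (use U in auto)
qed

definition SB :: "'a::comm_ring_1 set set \<Rightarrow> bool" where
  "SB U \<longleftrightarrow> (openin zariski_ideals U \<and> compactin zariski_ideals U) \<or>
              (\<exists>V. openin zariski_ideals V \<and> compactin zariski_ideals V \<and> U = topspace zariski_ideals - V)"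

lemma cons_openin:
  "openin (constructible_topology zariski_ideals) =
     arbitrary union_of (finite intersection_of (SB :: 'a::comm_ring_1 set set \<Rightarrow> bool) relative_to topspace zariski_ideals)"
  unfolding constructible_topology_def SB_def[abs_def] by (rule ext) (rule openin_subbase)

lemma cons_topspace:
  "topspace (constructible_topology (zariski_ideals :: 'a::comm_ring_1 set topology)) = {I. ring_ideal I}"
  unfolding constructible_topology_def by (simp add: zar_topspace)

lemma SB_open: assumes "SB U" shows "openin (constructible_topology zariski_ideals) U"
proof -
  have "U \<subseteq> topspace zariski_ideals" using assms unfolding SB_def using openin_subset by blast
  then have "(finite intersection_of SB relative_to topspace zariski_ideals) U"
    unfolding relative_to_def using finite_intersection_of_inc[of SB U, OF assms]
    by (intro exI[of _ U]) blast
  then show ?thesis unfolding cons_openin by (rule arbitrary_union_of_inc)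
qed

lemma SB_nbhd:
  assumes "SB U" "I \<in> U" "ring_ideal I"
  shows "\<exists>F G. finite F \<and> finite G \<and> F \<subseteq> I \<and> G \<inter> I = {} \<and>
           (\<forall>J. ring_ideal J \<and> F \<subseteq> J \<and> G \<inter> J = {} \<longrightarrow> J \<in> U)"
proof (cases "openin zariski_ideals U \<and> compactin zariski_ideals U")
  case True
  then obtain F where "finite F" "F \<subseteq> I" "basic F \<subseteq> U" using zar_open_point[OF _ assms(2)] by blast
  then have "finite F \<and> finite ({}::'a set) \<and> F \<subseteq> I \<and> {} \<inter> I = {} \<and>
           (\<forall>J. ring_ideal J \<and> F \<subseteq> J \<and> {} \<inter> J = {} \<longrightarrow> J \<in> U)" unfolding basic_def by auto
  then show ?thesis by blast
next
  case False
  then obtain V where V: "openin zariski_ideals V" "compactin zariski_ideals V" "U = topspace zariski_ideals - V"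
    using assms(1) unfolding SB_def by blast
  obtain \<U> where \<U>: "\<U> \<subseteq> Collect BP" "\<Union>\<U> = V" using V(1) unfolding zar_openin union_of_def by blast
  have "\<forall>W\<in>\<U>. openin zariski_ideals W" using \<U> unfolding zar_openin
    by (auto intro: arbitrary_union_of_inc)
  moreover have "V \<subseteq> \<Union>\<U>" using \<U>(2) by simp
  ultimately have "(\<forall>W\<in>\<U>. openin zariski_ideals W) \<and> V \<subseteq> \<Union>\<U>" by blast
  then obtain \<F> where \<F>: "finite \<F>" "\<F> \<subseteq> \<U>" "V \<subseteq> \<Union>\<F>"
    using V(2) unfolding compactin_def by (elim conjE allE[of _ \<U>] impE) blast+
  have IV: "I \<notin> V" using assms(2) V(3) by blast
  have ex: "\<forall>W\<in>\<F>. \<exists>g. g \<notin> I \<and> (\<forall>J. g \<notin> J \<longrightarrow> J \<notin> W)"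
  proof
    fix W assume "W \<in> \<F>"
    then obtain Gw where Gw: "finite Gw" "W = basic Gw" using \<F>(2) \<U>(1) unfolding BP_def by blast
    have "I \<notin> W" using IV \<open>W \<in> \<F>\<close> \<F>(2) \<U>(2) by blast
    then obtain g where "g \<in> Gw" "g \<notin> I" using assms(3) Gw(2) unfolding basic_def by blast
    then show "\<exists>g. g \<notin> I \<and> (\<forall>J. g \<notin> J \<longrightarrow> J \<notin> W)" using Gw(2) unfolding basic_def by blast
  qed
  obtain gf where gf0: "\<forall>W\<in>\<F>. gf W \<notin> I \<and> (\<forall>J. gf W \<notin> J \<longrightarrow> J \<notin> W)"
    using bchoice[OF ex] by blast
  then have gf: "\<And>W. W \<in> \<F> \<Longrightarrow> gf W \<notin> I \<and> (\<forall>J. gf W \<notin> J \<longrightarrow> J \<notin> W)" by blast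
  show ?thesis
  proof (rule exI[of _ "{}"], rule exI[of _ "gf ` \<F>"], intro conjI allI impI)
    show "finite (gf ` \<F>)" using \<F>(1) by simp
    show "gf ` \<F> \<inter> I = {}" using gf by blast
  next
    fix J assume J: "ring_ideal J \<and> {} \<subseteq> J \<and> gf ` \<F> \<inter> J = {}"
    have "J \<notin> V"
    proof
      assume "J \<in> V"
      then obtain W where "W \<in> \<F>" "J \<in> W" using \<F>(3) by blast
      then show False using gf J by blast
    qed
    then show "J \<in> U" using J V(3) zar_topspace by blast
  qed simp_all
qed

lemma SB_nbhd_fin:
  assumes "finite \<V>" "\<forall>U\<in>\<V>. SB U \<and> I \<in> U" "ring_ideal I"
  shows "\<exists>F G. finite F \<and> finite G \<and> F \<subseteq> I \<and> G \<inter> I = {} \<and>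
           (\<forall>J. ring_ideal J \<and> F \<subseteq> J \<and> G \<inter> J = {} \<longrightarrow> J \<in> \<Inter>\<V>)"
  using assms(1,2)
proof (induction \<V> rule: finite_induct)
  case empty
  show ?case by (rule exI[of _ "{}"], rule exI[of _ "{}"]) simp
next
  case (insert U \<V>)
  have p: "\<forall>U\<in>\<V>. SB U \<and> I \<in> U" using insert.prems by simp
  obtain F1 G1 where h1: "finite F1" "finite G1" "F1 \<subseteq> I" "G1 \<inter> I = {}"
    "\<forall>J. ring_ideal J \<and> F1 \<subseteq> J \<and> G1 \<inter> J = {} \<longrightarrow> J \<in> \<Inter>\<V>" using insert.IH[OF p] by blast
  have u: "SB U" "I \<in> U" using insert.prems by simp_all
  obtain F2 G2 where h2: "finite F2" "finite G2" "F2 \<subseteq> I" "G2 \<inter> I = {}"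
    "\<forall>J. ring_ideal J \<and> F2 \<subseteq> J \<and> G2 \<inter> J = {} \<longrightarrow> J \<in> U"
    using SB_nbhd[OF u assms(3)] by blast
  have c5: "\<forall>J. ring_ideal J \<and> F1 \<union> F2 \<subseteq> J \<and> (G1 \<union> G2) \<inter> J = {} \<longrightarrow> J \<in> \<Inter>(insert U \<V>)"
  proof (intro allI impI)
    fix J assume J: "ring_ideal J \<and> F1 \<union> F2 \<subseteq> J \<and> (G1 \<union> G2) \<inter> J = {}"
    have "J \<in> \<Inter>\<V>" using h1(5) J by blast
    moreover have "J \<in> U" using h2(5) J by blast
    ultimately show "J \<in> \<Inter>(insert U \<V>)" by simp
  qed
  have c14: "finite (F1 \<union> F2)" "finite (G1 \<union> G2)" "F1 \<union> F2 \<subseteq> I" "(G1 \<union> G2) \<inter> I = {}"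
    using h1 h2 by auto
  show ?case
  proof (rule exI[of _ "F1 \<union> F2"], rule exI[of _ "G1 \<union> G2"], intro conjI)
  qed (fact c14 c5)+
qed

lemma closure_eq:
  fixes P :: "'a::comm_ring_1 set"
  assumes noeth: "noetherian_ring TYPE('a)" and pr: "prime_ideal P"
  shows "(subtopology (constructible_topology zariski_ideals) proper_ideals) closure_of primary_ideals_of P = Csat P"
proof -
  let ?Y = "constructible_topology (zariski_ideals :: 'a set topology)"
  have PPsub: "primary_ideals_of P \<subseteq> proper_ideals"
    unfolding primary_ideals_of_def primary_ideal_def proper_ideals_def by blast
  have eq: "(subtopology ?Y proper_ideals) closure_of primary_ideals_of P
      = proper_ideals \<inter> (?Y closure_of primary_ideals_of P)"
    unfolding closure_of_subtopology using PPsub by (simp add: Int_absorb1)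
  show ?thesis unfolding eq
  proof
    show "proper_ideals \<inter> ?Y closure_of primary_ideals_of P \<subseteq> Csat P"
    proof
      fix I assume "I \<in> proper_ideals \<inter> ?Y closure_of primary_ideals_of P"
      then have Ip: "ring_ideal I" "I \<noteq> UNIV" and Icl: "I \<in> ?Y closure_of primary_ideals_of P"
        unfolding proper_ideals_def by auto
      have "x \<in> I" if sP: "s \<notin> P" and sx: "s * x \<in> I" for s x
      proof (rule ccontr)
        assume xI: "x \<notin> I"
        define T where "T = basic {s * x} \<inter> (topspace zariski_ideals - basic {x})"
        have o1: "openin ?Y (basic {s * x})"
          by (rule SB_open) (simp add: SB_def zar_open_basic basic_compact)
        have o2: "openin ?Y (topspace zariski_ideals - basic {x})"
          unfolding SB_def
          by (rule SB_open[unfolded SB_def], rule disjI2, rule exI[of _ "basic {x}"]) (simp add: zar_open_basic basic_compact)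
        have "openin ?Y T" unfolding T_def using o1 o2 by (rule openin_Int)
        moreover have "I \<in> T" unfolding T_def basic_def zar_topspace using Ip sx xI by auto
        ultimately obtain Q where Q: "Q \<in> primary_ideals_of P" "Q \<in> T" using Icl unfolding in_closure_of by blast
        have "Q \<in> Csat P" using PP_Csat[OF pr Q(1)] .
        moreover have "s * x \<in> Q" "x \<notin> Q" using Q(2) unfolding T_def basic_def zar_topspace by auto
        ultimately show False using sP unfolding Csat_def by blast
      qed
      then show "I \<in> Csat P" unfolding Csat_def using Ip by blast
    qed
  next
    show "Csat P \<subseteq> proper_ideals \<inter> ?Y closure_of primary_ideals_of P"
    proof
      fix I assume I: "I \<in> Csat P"
      have Ii: "ring_ideal I" using I unfolding Csat_def by blast
      have "I \<in> proper_ideals" using I unfolding Csat_def proper_ideals_def by blast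
      moreover have "I \<in> ?Y closure_of primary_ideals_of P"
        unfolding in_closure_of
      proof (intro conjI allI impI)
        show "I \<in> topspace ?Y" unfolding cons_topspace using Ii by simp
      next
        fix T assume T: "I \<in> T \<and> openin ?Y T"
        then obtain \<W> where W: "\<W> \<subseteq> Collect (finite intersection_of SB relative_to topspace zariski_ideals)" "\<Union>\<W> = T"
          unfolding cons_openin union_of_def by blast
        then obtain W where "W \<in> \<W>" "I \<in> W" using T by blast
        then obtain W0 where W0: "(finite intersection_of SB) W0" "topspace zariski_ideals \<inter> W0 = W"
          using W(1) unfolding relative_to_def by blast
        then obtain \<V> where V: "finite \<V>" "\<V> \<subseteq> Collect SB" "\<Inter>\<V> = W0"
          unfolding intersection_of_def by blast
        have "\<forall>U\<in>\<V>. SB U \<and> I \<in> U" using V \<open>I \<in> W\<close> W0(2) by blast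
        then obtain F G where FG: "finite F" "finite G" "F \<subseteq> I" "G \<inter> I = {}"
           "\<forall>J. ring_ideal J \<and> F \<subseteq> J \<and> G \<inter> J = {} \<longrightarrow> J \<in> \<Inter>\<V>"
          using SB_nbhd_fin[OF V(1) _ Ii] by blast
        obtain Q where Q: "Q \<in> primary_ideals_of P" "I \<subseteq> Q" "G \<inter> Q = {}"
          using key_finite[OF noeth pr I FG(2,4)] by blast
        have Qi: "ring_ideal Q" using Q(1) unfolding primary_ideals_of_def primary_ideal_def by blast
        have "Q \<in> \<Inter>\<V>" using FG(3,5) Q(2,3) Qi by blast
        then have "Q \<in> W" using W0 V(3) Qi zar_topspace by blast
        then have "Q \<in> T" using \<open>W \<in> \<W>\<close> W(2) by blast
        then show "\<exists>y. y \<in> primary_ideals_of P \<and> y \<in> T" using Q(1) by blast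
      qed
      ultimately show "I \<in> proper_ideals \<inter> ?Y closure_of primary_ideals_of P" by blast
    qed
  qed
qed



theorem proposition5p3:
  assumes "noetherian_ring TYPE('a::comm_ring_1)"
  shows "(\<forall>(P :: 'a set) (f :: 'a \<Rightarrow> 'b::comm_ring_1).
            prime_ideal P \<and> is_localization_at P f \<longrightarrow>
              primary_intersections_of P =
                (subtopology (constructible_topology zariski_ideals) proper_ideals)
                  closure_of primary_ideals_of P
            \<and> (subtopology (constructible_topology zariski_ideals) proper_ideals)
                  closure_of primary_ideals_of P
                = (\<lambda>J. f -` J) ` (proper_ideals :: 'b set set))
       \<and> (\<forall>M :: 'a set. local_ring_with M \<longrightarrow>
            (subtopology (constructible_topology zariski_ideals) proper_ideals)
              closure_of primary_ideals_of M = proper_ideals)"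
proof (intro conjI allI impI)
  fix P :: "'a set" and f :: "'a \<Rightarrow> 'b"
  assume h: "prime_ideal P \<and> is_localization_at P f"
  show "primary_intersections_of P =
      (subtopology (constructible_topology zariski_ideals) proper_ideals) closure_of primary_ideals_of P"
    using intersections_eq[OF assms] closure_eq[OF assms] h by simp
  show "(subtopology (constructible_topology zariski_ideals) proper_ideals) closure_of primary_ideals_of P
      = (\<lambda>J. f -` J) ` (proper_ideals :: 'b set set)"
    using localization_image[of P f] closure_eq[OF assms] h by simp
next
  fix M :: "'a set" assume loc: "local_ring_with M"
  then have "prime_ideal M" using maximal_prime unfolding local_ring_with_def by blast
  then show "(subtopology (constructible_topology zariski_ideals) proper_ideals)
              closure_of primary_ideals_of M = proper_ideals"
    using closure_eq[OF assms] local_Csat[OF loc] by simp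
qed

end
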